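(* The maps $\mathbf{W}_+:R_+\to\mathbb{R}^2$ and $\mathbf{W}_-:R_-\to\mathbb{R}^2$ given by $$\mathbf{W}_\pm(x,y)=\left(\frac{1+\omega_\pm}{1-\omega_\pm}\,x,\ \frac{|\omega_\pm|}{1+\omega_\pm}\,y\right),\qquad \omega_\pm=\omega_\pm(x,y),$$ are orientation preserving homeomorphisms onto their respective images (which are contained in $R$).
   Context: For $x>0$, $y\in\mathbb{R}$ let $r_1^2=4+x^2+4x^2y^2$, $\Delta=((x+2)^2+8x^2y^2)((x-2)^2+8x^2y^2)$ and $\omega_\pm(x,y)=\frac{x^2-4\pm\sqrt{\Delta}}{2r_1^2}$. Let $R=\{(x,y): x>0,\ 4-4y^2-x^2y^2-8x^2y^4\ge 0\}$, $R_+=R\cap((0,2]\times\mathbb{R})$, $R_-=R\cap([2,\infty)\times\mathbb{R})$. On $R_+$ one has $0\le\omega_+<1$ and on $R_-$ one has $-1<\omega_-\le 0$. *)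

theory Defs
  imports "HOL-Analysis.Analysis"
begin

definition r1sq :: "real \<Rightarrow> real \<Rightarrow> real" where
  "r1sq x y = 4 + x^2 + 4 * x^2 * y^2"

definition Delta :: "real \<Rightarrow> real \<Rightarrow> real" where
  "Delta x y = ((x + 2)^2 + 8 * x^2 * y^2) * ((x - 2)^2 + 8 * x^2 * y^2)"

definition omega_plus :: "real \<Rightarrow> real \<Rightarrow> real" where
  "omega_plus x y = (x^2 - 4 + sqrt (Delta x y)) / (2 * r1sq x y)"

definition omega_minus :: "real \<Rightarrow> real \<Rightarrow> real" where
  "omega_minus x y = (x^2 - 4 - sqrt (Delta x y)) / (2 * r1sq x y)"

definition Rset :: "(real \<times> real) set" where
  "Rset = {(x, y). x > 0 \<and> 4 - 4 * y^2 - x^2 * y^2 - 8 * x^2 * y^4 \<ge> 0}"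

definition Rplus :: "(real \<times> real) set" where
  "Rplus = Rset \<inter> ({0<..2} \<times> UNIV)"

definition Rminus :: "(real \<times> real) set" where
  "Rminus = Rset \<inter> ({2..} \<times> UNIV)"

definition Wmap :: "(real \<Rightarrow> real \<Rightarrow> real) \<Rightarrow> real \<times> real \<Rightarrow> real \<times> real" where
  "Wmap om p = (let x = fst p; y = snd p; w = om x y in
      ((1 + w) / (1 - w) * x, \<bar>w\<bar> / (1 + w) * y))"

definition W_plus :: "real \<times> real \<Rightarrow> real \<times> real" where
  "W_plus = Wmap omega_plus"

definition W_minus :: "real \<times> real \<Rightarrow> real \<times> real" where
  "W_minus = Wmap omega_minus"

definition jac_det :: "(real \<times> real \<Rightarrow> real \<times> real) \<Rightarrow> real" where
  "jac_det D = fst (D (1, 0)) * snd (D (0, 1)) - fst (D (0, 1)) * snd (D (1, 0))"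

definition orientation_preserving_on ::
    "(real \<times> real) set \<Rightarrow> (real \<times> real \<Rightarrow> real \<times> real) \<Rightarrow> bool" where
  "orientation_preserving_on S f \<longleftrightarrow>
     (\<forall>p \<in> interior S. \<exists>D. (f has_derivative D) (at p) \<and> jac_det D \<ge> 0) \<and>
     (\<exists>p \<in> interior S. \<exists>D. (f has_derivative D) (at p) \<and> jac_det D > 0)"

end

theory Submission
  imports Defs
begin

lemma r1sq_pos: "r1sq x y > 0"
  unfolding r1sq_def by (auto intro!: add_pos_nonneg)

lemma Delta_eq: "Delta x y = (x^2-4)^2 + 16*x^2*y^2*r1sq x y"
  unfolding Delta_def r1sq_def by algebra

lemma Delta_nonneg: "Delta x y \<ge> 0"
  unfolding Delta_eq using r1sq_pos[of x y] by auto

lemma sqrtD_sq: "sqrt (Delta x y) ^ 2 = Delta x y"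
  using Delta_nonneg by simp

lemma quad_gen:
  assumes "w = (x^2 - 4 + s * sqrt (Delta x y)) / (2 * r1sq x y)" "s^2 = 1"
  shows "r1sq x y * w^2 - (x^2-4)*w - 4*x^2*y^2 = 0"
proof -
  have r: "r1sq x y \<noteq> 0" using r1sq_pos[of x y] by simp
  have "4 * r1sq x y * (r1sq x y * w^2 - (x^2-4)*w - 4*x^2*y^2) =
     (x^2 - 4 + s * sqrt (Delta x y))^2 - 2*(x^2-4)*(x^2 - 4 + s * sqrt (Delta x y)) - 16*x^2*y^2*r1sq x y"
    using r unfolding assms(1) by (simp add: field_simps power2_eq_square)
  also have "\<dots> = s^2 * (sqrt (Delta x y))^2 - (x^2-4)^2 - 16*x^2*y^2*r1sq x y"
    by (simp add: algebra_simps power2_eq_square)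
  also have "\<dots> = 0" using assms(2) sqrtD_sq Delta_eq by simp
  finally show ?thesis using r by simp
qed

lemma quad_plus: "r1sq x y * (omega_plus x y)^2 - (x^2-4)* omega_plus x y - 4*x^2*y^2 = 0"
  by (rule quad_gen[where s=1]) (auto simp: omega_plus_def)
lemma quad_minus: "r1sq x y * (omega_minus x y)^2 - (x^2-4)* omega_minus x y - 4*x^2*y^2 = 0"
  by (rule quad_gen[where s="-1"]) (auto simp: omega_minus_def)

lemma sqrtD_ge: "sqrt (Delta x y) \<ge> \<bar>x^2 - 4\<bar>"
proof -
  have "(x^2-4)^2 \<le> Delta x y" unfolding Delta_eq using r1sq_pos[of x y] by auto
  then have "sqrt ((x^2-4)^2) \<le> sqrt (Delta x y)" by (rule real_sqrt_le_mono)
  then show ?thesis by simp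
qed

lemma omp_nonneg: "omega_plus x y \<ge> 0"
  unfolding omega_plus_def using sqrtD_ge[of x y] r1sq_pos[of x y]
  by (intro divide_nonneg_pos) auto

lemma omm_nonpos: "omega_minus x y \<le> 0"
  unfolding omega_minus_def using sqrtD_ge[of x y] r1sq_pos[of x y]
  by (intro divide_nonpos_pos) auto

lemma omp_lt1: "omega_plus x y < 1"
proof -
  have r: "r1sq x y > 0" by (rule r1sq_pos)
  have "Delta x y < (12 + x^2 + 8*x^2*y^2)^2"
  proof -
    have "(12+x^2)^2 - (x^2-4)^2 = 32*x^2+128" by (simp add: algebra_simps power2_eq_square)
    then have a: "(x^2-4)^2 < (12+x^2)^2" using zero_le_power2[of x] by linarith
    have e: "16*x^2*y^2*r1sq x y = 16*(x^2*y^2)*(4+x^2) + 64*x^4*y^4"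
      unfolding r1sq_def by (simp add: algebra_simps power2_eq_square power4_eq_xxxx)
    have "16*(x^2*y^2)*(4+x^2) \<le> 16*(x^2*y^2)*(12+x^2)"
      by (intro mult_left_mono) auto
    with e have "16*x^2*y^2*r1sq x y \<le> 16*x^2*y^2*(12+x^2) + 64*x^4*y^4" by simp
    have "(12 + x^2 + 8*x^2*y^2)^2 = (12+x^2)^2 + 16*x^2*y^2*(12+x^2) + 64*x^4*y^4"
      by (simp add: algebra_simps power2_eq_square power4_eq_xxxx)
    with a \<open>16*x^2*y^2*r1sq x y \<le> _\<close> show ?thesis unfolding Delta_eq by linarith
  qed
  then have "sqrt (Delta x y) < 12 + x^2 + 8*x^2*y^2"
    by (metis abs_of_nonneg add_nonneg_nonneg mult_nonneg_nonneg real_sqrt_abs real_sqrt_less_iff zero_le_numeral zero_le_power2)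
  then show ?thesis unfolding omega_plus_def using r by (simp add: divide_less_eq r1sq_def)
qed

lemma omm_gtm1: assumes "x \<noteq> 0" shows "omega_minus x y > -1"
proof -
  have r: "r1sq x y > 0" by (rule r1sq_pos)
  have "Delta x y < (3*x^2 + 4 + 8*x^2*y^2)^2"
  proof -
    have x2: "x^2 > 0" using assms by simp
    have "(3*x^2+4)^2 - (x^2-4)^2 = 8*x^2*x^2+32*x^2" by (simp add: algebra_simps power2_eq_square)
    moreover have "8*x^2*x^2 + 32*x^2 > 0" using x2 by (simp add: add_pos_pos)
    ultimately have a: "(x^2-4)^2 < (3*x^2+4)^2" by linarith
    have e: "16*x^2*y^2*r1sq x y = 16*(x^2*y^2)*(4+x^2) + 64*x^4*y^4"
      unfolding r1sq_def by (simp add: algebra_simps power2_eq_square power4_eq_xxxx)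
    have "16*(x^2*y^2)*(4+x^2) \<le> 16*(x^2*y^2)*(3*x^2+4)"
      by (intro mult_left_mono) auto
    with e have "16*x^2*y^2*r1sq x y \<le> 16*x^2*y^2*(3*x^2+4) + 64*x^4*y^4" by simp
    have "(3*x^2 + 4 + 8*x^2*y^2)^2 = (3*x^2+4)^2 + 16*x^2*y^2*(3*x^2+4) + 64*x^4*y^4"
      by (simp add: algebra_simps power2_eq_square power4_eq_xxxx)
    with a \<open>16*x^2*y^2*r1sq x y \<le> _\<close> show ?thesis unfolding Delta_eq by linarith
  qed
  then have "sqrt (Delta x y) < 3*x^2 + 4 + 8*x^2*y^2"
    by (metis abs_of_nonneg add_nonneg_nonneg mult_nonneg_nonneg real_sqrt_abs real_sqrt_less_iff zero_le_numeral zero_le_power2 zero_le_mult_iff)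
  then show ?thesis unfolding omega_minus_def using r by (simp add: less_divide_eq r1sq_def)
qed

lemma vieta: "r1sq x y * c^2 - (x^2-4)*c - 4*x^2*y^2 = r1sq x y * (c - omega_plus x y) * (c - omega_minus x y)"
proof -
  have r: "r1sq x y \<noteq> 0" using r1sq_pos[of x y] by simp
  have s: "omega_plus x y + omega_minus x y = (x^2-4) / r1sq x y"
    unfolding omega_plus_def omega_minus_def using r by (simp add: field_simps)
  have p: "omega_plus x y * omega_minus x y = -4*x^2*y^2 / r1sq x y"
  proof -
    have "omega_plus x y * omega_minus x y = ((x^2-4)^2 - (sqrt (Delta x y))^2) / (4 * (r1sq x y)^2)"
      unfolding omega_plus_def omega_minus_def by (simp add: field_simps power2_eq_square)
    also have "\<dots> = ((x^2-4)^2 - Delta x y) / (4 * (r1sq x y)^2)" using sqrtD_sq by simp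
    also have "\<dots> = -4*x^2*y^2 / r1sq x y" using r unfolding Delta_eq
      by (simp add: field_simps power2_eq_square)
    finally show ?thesis .
  qed
  have "r1sq x y * (c - omega_plus x y) * (c - omega_minus x y) =
     r1sq x y * c^2 - r1sq x y * (omega_plus x y + omega_minus x y) * c + r1sq x y * (omega_plus x y * omega_minus x y)"
    by (simp add: algebra_simps power2_eq_square)
  also have "\<dots> = r1sq x y * c^2 - (x^2-4)*c - 4*x^2*y^2" unfolding s p using r by simp
  finally show ?thesis by simp
qed

lemma Rcon_mult: "(x::real)^2 * (4 - 4*y^2 - x^2*y^2 - 8*x^2*y^4) = 4*x^2 - 4*(x^2*y^2) - x^2*(x^2*y^2) - 8*(x^2*y^2)^2"
  by (simp add: algebra_simps power2_eq_square power4_eq_xxxx)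

lemma Rplus_D: "(x,y) \<in> Rplus \<Longrightarrow> 0 < x \<and> x \<le> 2 \<and> 4 - 4*y^2 - x^2*y^2 - 8*x^2*y^4 \<ge> 0"
  unfolding Rplus_def Rset_def by auto

lemma Rminus_D: "(x,y) \<in> Rminus \<Longrightarrow> 0 < x \<and> 2 \<le> x \<and> 4 - 4*y^2 - x^2*y^2 - 8*x^2*y^4 \<ge> 0"
  unfolding Rminus_def Rset_def by auto

lemma z_le1:
  fixes x y :: real
  assumes "0 < x" "x \<le> 2" "4 - 4*y^2 - x^2*y^2 - 8*x^2*y^4 \<ge> 0"
  shows "x^2*y^2 \<le> 1"
proof (rule ccontr)
  define z where "z = x^2*y^2"
  define X where "X = x^2"
  assume "\<not> x^2*y^2 \<le> 1"
  then have z1: "z > 1" unfolding z_def by simp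
  have X4: "X \<le> 4" "X > 0" unfolding X_def using assms power_mono[of x 2 2] by auto
  have c: "4*X - 4*z - X*z - 8*z^2 \<ge> 0" using Rcon_mult[of x y] assms(3) unfolding z_def X_def
    by (metis mult_nonneg_nonneg zero_le_power2)
  have "X*z \<ge> X" using z1 X4 by simp
  moreover have "z^2 > 1" using z1 by (simp add: one_less_power)
  ultimately show False using c X4 z1 by linarith
qed

lemma omp_le: assumes "(x,y) \<in> Rplus" shows "omega_plus x y \<le> 3/5"
proof -
  from Rplus_D[OF assms] have a: "0 < x" "x \<le> 2" "4 - 4*y^2 - x^2*y^2 - 8*x^2*y^4 \<ge> 0" by auto
  have z: "x^2*y^2 \<le> 1" using z_le1[OF a] .
  have X: "x^2 \<le> 4" using a power_mono[of x 2 2] by auto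
  have "r1sq x y * (3/5)^2 - (x^2-4)*(3/5) - 4*x^2*y^2 = 96/25 - 6/25*x^2 - 64/25*(x^2*y^2)"
    unfolding r1sq_def by (simp add: power2_eq_square field_simps)
  then have "r1sq x y * (3/5)^2 - (x^2-4)*(3/5) - 4*x^2*y^2 \<ge> 0"
    using z X by linarith
  then have "r1sq x y * (3/5 - omega_plus x y) * (3/5 - omega_minus x y) \<ge> 0" using vieta[of x y "3/5"] by linarith
  moreover have "3/5 - omega_minus x y > 0" using omm_nonpos[of x y] by simp
  ultimately have "3/5 - omega_plus x y \<ge> 0" using r1sq_pos[of x y]
    by (metis mult_pos_pos zero_le_mult_iff not_le)
  then show ?thesis by simp
qed

lemma ysq_le: assumes "(x,y) \<in> Rminus" shows "y^2 \<le> 1/4"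
proof -
  from Rminus_D[OF assms] have a: "0 < x" "2 \<le> x" "4 - 4*y^2 - x^2*y^2 - 8*x^2*y^4 \<ge> 0" by auto
  have X: "x^2 \<ge> 4" using a power_mono[of 2 x 2] by auto
  have "x^2*y^2 \<ge> 4*y^2" using X by (simp add: mult_right_mono)
  moreover have "x^2*y^4 \<ge> 4*y^4" using X by (simp add: mult_right_mono)
  moreover have "y^4 = (y^2)^2" by simp
  ultimately have c: "8*y^2 + 32*(y^2)^2 \<le> 4" using a(3) by linarith
  show ?thesis
  proof (rule ccontr)
    assume "\<not> ?thesis"
    then have "y^2 > 1/4" by simp
    moreover have "(y^2)^2 > (1/4)^2" using \<open>y^2 > 1/4\<close> by (intro power_strict_mono) auto
    ultimately show False using c by (simp add: power2_eq_square)
  qed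
qed

lemma omm_ge: assumes "(x,y) \<in> Rminus" shows "omega_minus x y \<ge> -3/5"
proof -
  from Rminus_D[OF assms] have a: "0 < x" "2 \<le> x" "4 - 4*y^2 - x^2*y^2 - 8*x^2*y^4 \<ge> 0" by auto
  define z where "z = x^2*y^2"
  define X where "X = x^2"
  have X: "X \<ge> 4" unfolding X_def using a power_mono[of 2 x 2] by auto
  have c: "4*X - 4*z - X*z - 8*z^2 \<ge> 0" using Rcon_mult[of x y] a(3) unfolding z_def X_def
    by (metis mult_nonneg_nonneg zero_le_power2)
  have z: "z \<le> 3/8*(X-1)"
  proof (rule ccontr)
    assume "\<not> ?thesis"
    then have zz: "z > 3/8*(X-1)" by simp
    have "(4+X)*z > (4+X)*(3/8*(X-1))" using zz X by (intro mult_strict_left_mono) auto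
    moreover have "z^2 > (3/8*(X-1))^2" using zz X by (intro power_strict_mono) auto
    moreover have "X*(3/2*X - 41/8) \<ge> 4*(7/8)" using X by (intro mult_mono) auto
    ultimately show False using c by (simp add: power2_eq_square algebra_simps)
  qed
  have "r1sq x y * (-3/5)^2 - (x^2-4)*(-3/5) - 4*x^2*y^2 = 24/25*X - 24/25 - 64/25*z"
    unfolding r1sq_def z_def X_def by (simp add: power2_eq_square field_simps)
  moreover have "8*z \<le> 3*X - 3" using z by simp
  ultimately have "r1sq x y * (-3/5)^2 - (x^2-4)*(-3/5) - 4*x^2*y^2 \<ge> 0"
    by linarith
  then have "r1sq x y * (-3/5 - omega_plus x y) * (-3/5 - omega_minus x y) \<ge> 0" using vieta[of x y "-3/5"] by linarith
  moreover have "-3/5 - omega_plus x y < 0" using omp_nonneg[of x y] by simp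
  ultimately have "-3/5 - omega_minus x y \<le> 0" using r1sq_pos[of x y]
    by (metis mult_pos_neg zero_le_mult_iff not_le mult_neg_pos)
  then show ?thesis by simp
qed

lemma ineq_plus:
  fixes a z V Z :: real
  assumes "a \<ge> 0" "z \<ge> 0" "4 - 4*a - z - 8*z*a \<ge> 0" "V \<ge> 0" "Z \<ge> 0"
    "V \<le> 9/64*a" "Z \<le> 9/4*z" "z \<le> 1"
  shows "4 - 4*V - Z - 8*Z*V \<ge> 0"
proof -
  have "Z*V \<le> (9/4*z)*(9/64*a)" using assms by (intro mult_mono) auto
  then show ?thesis using assms by (simp add: algebra_simps) 
qed

lemma ineq_minus:
  fixes a z V Z :: real
  assumes "a \<ge> 0" "z \<ge> 0" "4 - 4*a - z - 8*z*a \<ge> 0" "V \<ge> 0" "Z \<ge> 0"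
    "V \<le> 9/4*a" "Z \<le> 9/64*z" "a \<le> 1/4"
  shows "4 - 4*V - Z - 8*Z*V \<ge> 0"
proof -
  have "Z*V \<le> (9/64*z)*(9/4*a)" using assms by (intro mult_mono) auto
  then show ?thesis using assms by (simp add: algebra_simps) 
qed

lemma img_in_R:
  fixes x y w :: real
  assumes x: "x > 0" and c: "4 - 4*y^2 - x^2*y^2 - 8*x^2*y^4 \<ge> 0" and w: "-1 < w" "w < 1"
    and cases: "(\<bar>w\<bar>/(1+w) \<le> 3/8 \<and> \<bar>w\<bar>/(1-w) \<le> 3/2 \<and> x^2*y^2 \<le> 1) \<or>
                (\<bar>w\<bar>/(1+w) \<le> 3/2 \<and> \<bar>w\<bar>/(1-w) \<le> 3/8 \<and> y^2 \<le> 1/4)"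
  shows "((1+w)/(1-w)*x, \<bar>w\<bar>/(1+w)*y) \<in> Rset"
proof -
  define k1 where "k1 = \<bar>w\<bar>/(1+w)"
  define k2 where "k2 = \<bar>w\<bar>/(1-w)"
  define u where "u = (1+w)/(1-w)*x"
  define v where "v = k1*y"
  have k1: "k1 \<ge> 0" and k2: "k2 \<ge> 0" unfolding k1_def k2_def using w by auto
  have u: "u > 0" unfolding u_def using w x by auto
  have V: "v^2 = k1^2 * y^2" unfolding v_def by (simp add: power_mult_distrib)
  have w1: "1+w \<noteq> 0" "1-w \<noteq> 0" using w by auto
  have "(1+w)/(1-w) * (\<bar>w\<bar>/(1+w)) = ((1+w)*\<bar>w\<bar>)/((1+w)*(1-w))" by (simp add: mult.commute)
  also have "\<dots> = k2" unfolding k2_def by (rule nonzero_mult_divide_mult_cancel_left[OF w1(1)])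
  finally have "(1+w)/(1-w) * (\<bar>w\<bar>/(1+w)) = k2" .
  then have "u * v = k2 * (x*y)" unfolding u_def v_def k1_def by (metis mult.assoc mult.left_commute)
  then have Z: "u^2 * v^2 = k2^2 * (x^2*y^2)" by (metis power_mult_distrib)
  have con: "4 - 4*y^2 - x^2*y^2 - 8*(x^2*y^2)*y^2 \<ge> 0" using c by (simp add: power4_eq_xxxx power2_eq_square algebra_simps)
  have goal: "4 - 4 * v^2 - u^2 * v^2 - 8*(u^2 * v^2) * v^2 \<ge> 0"
    using cases
  proof
    assume h: "\<bar>w\<bar>/(1+w) \<le> 3/8 \<and> \<bar>w\<bar>/(1-w) \<le> 3/2 \<and> x^2*y^2 \<le> 1"
    have "k1^2 \<le> (3/8)^2" using h k1 unfolding k1_def by (intro power_mono) auto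
    then have "v^2 \<le> 9/64 * y^2" unfolding V by (intro mult_right_mono[of _ _ "y^2", simplified]) (auto simp: power2_eq_square)
    moreover have "k2^2 \<le> (3/2)^2" using h k2 unfolding k2_def by (intro power_mono) auto
    then have "u^2 * v^2 \<le> 9/4 * (x^2*y^2)" unfolding Z by (intro mult_right_mono) (auto simp: power2_eq_square)
    moreover have "x^2*y^2 \<le> 1" using h by blast
    ultimately show ?thesis by (intro ineq_plus[OF _ _ con]) simp_all
  next
    assume h: "\<bar>w\<bar>/(1+w) \<le> 3/2 \<and> \<bar>w\<bar>/(1-w) \<le> 3/8 \<and> y^2 \<le> 1/4"
    have "k1^2 \<le> (3/2)^2" using h k1 unfolding k1_def by (intro power_mono) auto
    then have "v^2 \<le> 9/4 * y^2" unfolding V by (intro mult_right_mono[of _ _ "y^2", simplified]) (auto simp: power2_eq_square)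
    moreover have "k2^2 \<le> (3/8)^2" using h k2 unfolding k2_def by (intro power_mono) auto
    then have "u^2 * v^2 \<le> 9/64 * (x^2*y^2)" unfolding Z by (intro mult_right_mono) (auto simp: power2_eq_square)
    moreover have "y^2 \<le> 1/4" using h by blast
    ultimately show ?thesis by (intro ineq_minus[OF _ _ con]) simp_all
  qed
  have "4 - 4 * v^2 - u^2 * v^2 - 8*u^2 * v^4 \<ge> 0" using goal by (simp add: power4_eq_xxxx power2_eq_square algebra_simps)
  then show ?thesis unfolding Rset_def using u by (simp add: u_def v_def k1_def)
qed

lemma W_plus_eq: "W_plus (x,y) = ((1 + omega_plus x y)/(1 - omega_plus x y)*x, \<bar>omega_plus x y\<bar>/(1 + omega_plus x y)*y)"
  unfolding W_plus_def Wmap_def by (simp add: Let_def)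

lemma W_minus_eq: "W_minus (x,y) = ((1 + omega_minus x y)/(1 - omega_minus x y)*x, \<bar>omega_minus x y\<bar>/(1 + omega_minus x y)*y)"
  unfolding W_minus_def Wmap_def by (simp add: Let_def)

lemma W_plus_R: assumes "p \<in> Rplus" shows "W_plus p \<in> Rset"
proof -
  obtain x y where p: "p = (x,y)" by force
  from Rplus_D assms p have a: "0 < x" "x \<le> 2" "4 - 4*y^2 - x^2*y^2 - 8*x^2*y^4 \<ge> 0" by auto
  define w where "w = omega_plus x y"
  have w0: "0 \<le> w" "w \<le> 3/5" unfolding w_def using omp_nonneg omp_le assms p by auto
  have "\<bar>w\<bar>/(1+w) \<le> 3/8" using w0 by (simp add: divide_le_eq)
  moreover have "\<bar>w\<bar>/(1-w) \<le> 3/2" using w0 by (simp add: divide_le_eq)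
  moreover have "x^2*y^2 \<le> 1" using z_le1[OF a] .
  ultimately show ?thesis unfolding p W_plus_eq w_def[symmetric]
    by (intro img_in_R a(1) a(3)) (use w0 in auto)
qed

lemma W_minus_R: assumes "p \<in> Rminus" shows "W_minus p \<in> Rset"
proof -
  obtain x y where p: "p = (x,y)" by force
  from Rminus_D assms p have a: "0 < x" "2 \<le> x" "4 - 4*y^2 - x^2*y^2 - 8*x^2*y^4 \<ge> 0" by auto
  define w where "w = omega_minus x y"
  have w0: "w \<le> 0" "-3/5 \<le> w" unfolding w_def using omm_nonpos omm_ge assms p by auto
  have "\<bar>w\<bar> \<le> 3/2 * (1+w)" using w0 by simp
  then have "\<bar>w\<bar>/(1+w) \<le> 3/2" using w0 by (subst divide_le_eq) auto
  moreover have "\<bar>w\<bar> \<le> 3/8 * (1-w)" using w0 by simp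
  then have "\<bar>w\<bar>/(1-w) \<le> 3/8" using w0 by (subst divide_le_eq) auto
  moreover have "y^2 \<le> 1/4" using ysq_le assms p by auto
  ultimately show ?thesis unfolding p W_minus_eq w_def[symmetric]
    by (intro img_in_R a(1) a(3)) (use w0 in auto)
qed

definition phi :: "real \<Rightarrow> real \<Rightarrow> real" where
  "phi u w = (w/(1-w))^3 * (4 - u^2*((1-w)/(1+w))^3)"

lemma k_mono: fixes w1 w2 :: real assumes "w1 < w2" "w2 < 1" shows "w1/(1-w1) < w2/(1-w2)"
proof -
  have "w1/(1-w1) = 1/(1-w1) - 1" "w2/(1-w2) = 1/(1-w2) - 1" using assms by (auto simp: field_simps)
  moreover have "1/(1-w1) < 1/(1-w2)" using assms by (intro divide_strict_left_mono) auto
  ultimately show ?thesis by simp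
qed

lemma t_mono: fixes w1 w2 :: real assumes "w1 < w2" "-1 < w1" shows "(1-w2)/(1+w2) < (1-w1)/(1+w1)"
proof -
  have "(1-w1)/(1+w1) = 2/(1+w1) - 1" "(1-w2)/(1+w2) = 2/(1+w2) - 1" using assms by (auto simp: field_simps)
  moreover have "2/(1+w2) < 2/(1+w1)" using assms by (intro divide_strict_left_mono) auto
  ultimately show ?thesis by simp
qed

lemma phi_mono_plus:
  fixes u w1 w2 :: real
  assumes "u > 0" "0 \<le> w1" "w1 < w2" "w2 < 1" "4 - u^2*((1-w1)/(1+w1))^3 \<ge> 0"
  shows "phi u w1 < phi u w2"
proof -
  have t: "0 \<le> (1-w2)/(1+w2)" "(1-w2)/(1+w2) < (1-w1)/(1+w1)" using assms t_mono[of w1 w2] by auto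
  have "((1-w2)/(1+w2))^3 < ((1-w1)/(1+w1))^3" using t by (intro power_strict_mono) auto
  then have h: "4 - u^2*((1-w1)/(1+w1))^3 < 4 - u^2*((1-w2)/(1+w2))^3" using assms by simp
  have k0: "0 \<le> w1/(1-w1)" using assms by auto
  have k: "(w1/(1-w1))^3 < (w2/(1-w2))^3" using k0 k_mono[of w1 w2] assms by (intro power_strict_mono) auto
  have "phi u w1 \<le> (w1/(1-w1))^3 * (4 - u^2*((1-w2)/(1+w2))^3)"
    unfolding phi_def using h k0 by (intro mult_left_mono) auto
  also have "\<dots> < phi u w2" unfolding phi_def using h k assms(5) by (intro mult_strict_right_mono) auto
  finally show ?thesis .
qed

lemma neg3: "(-(a::real))^3 * (-b) = a^3*b" by (simp add: power3_eq_cube)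

lemma phi_mono_minus:
  fixes u w1 w2 :: real
  assumes "u > 0" "-1 < w1" "w1 < w2" "w2 \<le> 0" "4 - u^2*((1-w2)/(1+w2))^3 \<le> 0"
  shows "phi u w2 < phi u w1"
proof -
  have t: "0 \<le> (1-w2)/(1+w2)" "(1-w2)/(1+w2) < (1-w1)/(1+w1)" using assms t_mono[of w1 w2] by auto
  have "((1-w2)/(1+w2))^3 < ((1-w1)/(1+w1))^3" using t by (intro power_strict_mono) auto
  then have h: "-(4 - u^2*((1-w2)/(1+w2))^3) < -(4 - u^2*((1-w1)/(1+w1))^3)" using assms by simp
  have k0: "w2/(1-w2) \<le> 0" using assms by (auto simp: divide_nonpos_pos)
  have k1: "w1/(1-w1) < w2/(1-w2)" using k_mono[of w1 w2] assms by auto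
  have k: "(-(w2/(1-w2)))^3 < (-(w1/(1-w1)))^3" using k0 k1 by (intro power_strict_mono) auto
  have "phi u w2 = (-(w2/(1-w2)))^3 * (-(4 - u^2*((1-w2)/(1+w2))^3))" unfolding phi_def by (rule neg3[symmetric])
  also have "\<dots> \<le> (-(w1/(1-w1)))^3 * (-(4 - u^2*((1-w2)/(1+w2))^3))"
    using k assms(5) by (intro mult_right_mono) auto
  also have "\<dots> < (-(w1/(1-w1)))^3 * (-(4 - u^2*((1-w1)/(1+w1))^3))"
    using h k1 k0 by (intro mult_strict_left_mono) auto
  also have "\<dots> = phi u w1" unfolding phi_def by (rule neg3)
  finally show ?thesis .
qed

lemma z_id:
  fixes x y w :: real
  assumes w: "-1 < w" "w < 1" and Q: "r1sq x y * w^2 - (x^2-4)*w - 4*x^2*y^2 = 0"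
  shows "4*(x^2*y^2)*(1-w) = w*(4 - x^2*((1-w)/(1+w)))"
proof -
  have w1: "1+w \<noteq> 0" using w by auto
  have "4*(x^2*y^2)*(1-w)*(1+w) = w*(4*(1+w) - x^2*(1-w))"
    using Q unfolding r1sq_def by (simp add: algebra_simps power2_eq_square)
  also have "\<dots> = w*(4 - x^2*((1-w)/(1+w)))*(1+w)" using w1 by (simp add: field_simps)
  finally show ?thesis using w1 by simp
qed

lemma ut_id: fixes x w :: real assumes "-1 < w" "w < 1"
  shows "((1+w)/(1-w)*x)^2*((1-w)/(1+w))^3 = x^2*((1-w)/(1+w))"
proof -
  have w1: "1+w \<noteq> 0" "1-w \<noteq> 0" using assms by auto
  have ab: "(1+w)/(1-w) * ((1-w)/(1+w)) = 1" using w1 by simp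
  have "((1+w)/(1-w)*x)^2*((1-w)/(1+w))^3 = ((1+w)/(1-w) * ((1-w)/(1+w)))^2 * x^2 * ((1-w)/(1+w))"
    by (simp add: power2_eq_square power3_eq_cube)
  then show ?thesis unfolding ab by simp
qed

lemma key_id:
  fixes x y w :: real
  assumes w: "-1 < w" "w < 1" and Q: "r1sq x y * w^2 - (x^2-4)*w - 4*x^2*y^2 = 0"
  shows "4*(((1+w)/(1-w)*x)^2 * (\<bar>w\<bar>/(1+w)*y)^2) = phi ((1+w)/(1-w)*x) w"
proof -
  have w1: "1+w \<noteq> 0" "1-w \<noteq> 0" using w by auto
  define t where "t = (1-w)/(1+w)"
  have "(1+w)/(1-w) * (\<bar>w\<bar>/(1+w)) = ((1+w)*\<bar>w\<bar>)/((1+w)*(1-w))" by (simp add: mult.commute)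
  also have "\<dots> = \<bar>w\<bar>/(1-w)" by (rule nonzero_mult_divide_mult_cancel_left[OF w1(1)])
  finally have e: "(1+w)/(1-w)*x * (\<bar>w\<bar>/(1+w)*y) = \<bar>w\<bar>/(1-w) * (x*y)" by (metis mult.assoc mult.left_commute)
  have "((1+w)/(1-w)*x)^2 * (\<bar>w\<bar>/(1+w)*y)^2 = (w/(1-w))^2 * (x^2*y^2)"
  proof -
    have "((1+w)/(1-w)*x)^2 * (\<bar>w\<bar>/(1+w)*y)^2 = ((1+w)/(1-w)*x * (\<bar>w\<bar>/(1+w)*y))^2"
      by (simp only: power_mult_distrib)
    also have "\<dots> = (\<bar>w\<bar>/(1-w))^2 * (x*y)^2" unfolding e by (simp only: power_mult_distrib)
    also have "(\<bar>w\<bar>/(1-w))^2 = (w/(1-w))^2" by (simp add: power_divide)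
    finally show ?thesis by (simp add: power_mult_distrib)
  qed
  moreover have "4*(x^2*y^2) = w*(4 - x^2*t)/(1-w)"
  proof -
    have "4*(x^2*y^2)*(1-w) = w*(4 - x^2*t)" using z_id[OF w Q] unfolding t_def .
    then show ?thesis using w1(2) by (simp add: eq_divide_eq)
  qed
  moreover have "((1+w)/(1-w)*x)^2*((1-w)/(1+w))^3 = x^2*t" unfolding t_def by (rule ut_id[OF w])
  ultimately have f: "((1+w)/(1-w)*x)^2 * (\<bar>w\<bar>/(1+w)*y)^2 = (w/(1-w))^2 * (x^2*y^2)"
    "4*(x^2*y^2) = w*(4 - x^2*t)/(1-w)" "((1+w)/(1-w)*x)^2*t^3 = x^2*t" unfolding t_def by auto
  have "4*(((1+w)/(1-w)*x)^2 * (\<bar>w\<bar>/(1+w)*y)^2) = (w/(1-w))^2 * (4*(x^2*y^2))"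
    unfolding f(1) by (simp only: mult_ac)
  also have "\<dots> = (w/(1-w))^2 * (w*(4 - x^2*t)/(1-w))" unfolding f(2) ..
  also have "\<dots> = (w/(1-w))^3 * (4 - x^2*t)" by (simp add: power2_eq_square power3_eq_cube)
  also have "\<dots> = phi ((1+w)/(1-w)*x) w" unfolding phi_def t_def f(3)[unfolded t_def] ..
  finally show ?thesis .
qed

lemma h_plus: assumes "(x,y) \<in> Rplus" and "w = omega_plus x y"
  shows "4 - ((1+w)/(1-w)*x)^2*((1-w)/(1+w))^3 \<ge> 0"
proof -
  from Rplus_D[OF assms(1)] have a: "0 < x" "x \<le> 2" by auto
  have w: "0 \<le> w" "w < 1" using assms omp_nonneg omp_lt1 by auto
  have X: "x^2 \<le> 4" using a power_mono[of x 2 2] by auto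
  have "4 - x^2*((1-w)/(1+w)) \<ge> 0"
  proof (cases "w = 0")
    case True then show ?thesis using X by simp
  next
    case False
    have "w*(4 - x^2*((1-w)/(1+w))) = 4*(x^2*y^2)*(1-w)"
      using z_id[of w x y] w assms(2) quad_plus[of x y] by simp
    also have "\<dots> \<ge> 0" using w by simp
    finally show ?thesis using False w by (simp add: zero_le_mult_iff)
  qed
  then show ?thesis using ut_id[of w x] w by simp
qed

lemma h_minus: assumes "(x,y) \<in> Rminus" and "w = omega_minus x y"
  shows "4 - ((1+w)/(1-w)*x)^2*((1-w)/(1+w))^3 \<le> 0"
proof -
  from Rminus_D[OF assms(1)] have a: "0 < x" "2 \<le> x" by auto
  have w: "w \<le> 0" "-1 < w" using assms omm_nonpos omm_gtm1[of x y] a by auto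
  have X: "x^2 \<ge> 4" using a power_mono[of 2 x 2] by auto
  have "4 - x^2*((1-w)/(1+w)) \<le> 0"
  proof (cases "w = 0")
    case True then show ?thesis using X by simp
  next
    case False
    have "w*(4 - x^2*((1-w)/(1+w))) = 4*(x^2*y^2)*(1-w)"
      using z_id[of w x y] w assms(2) quad_minus[of x y] by simp
    also have "\<dots> \<ge> 0" using w by simp
    finally show ?thesis using False w by (simp add: zero_le_mult_iff)
  qed
  then show ?thesis using ut_id[of w x] w by simp
qed

lemma inj_generic:
  fixes om :: "real \<Rightarrow> real \<Rightarrow> real"
  assumes basic: "\<And>x y. (x,y) \<in> S \<Longrightarrow> x > 0 \<and> -1 < om x y \<and> om x y < 1 \<and>
      r1sq x y * (om x y)^2 - (x^2-4) * om x y - 4*x^2*y^2 = 0"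
  and mono: "\<And>x1 y1 x2 y2. (x1,y1) \<in> S \<Longrightarrow> (x2,y2) \<in> S \<Longrightarrow> om x1 y1 < om x2 y2 \<Longrightarrow>
      (1 + om x1 y1)/(1 - om x1 y1)*x1 = (1 + om x2 y2)/(1 - om x2 y2)*x2 \<Longrightarrow>
      phi ((1 + om x1 y1)/(1 - om x1 y1)*x1) (om x1 y1) \<noteq> phi ((1 + om x1 y1)/(1 - om x1 y1)*x1) (om x2 y2)"
  shows "inj_on (Wmap om) S"
proof (rule inj_onI)
  fix p q assume p: "p \<in> S" and q: "q \<in> S" and e: "Wmap om p = Wmap om q"
  obtain x1 y1 where p1: "p = (x1,y1)" by force
  obtain x2 y2 where q1: "q = (x2,y2)" by force
  define w1 where "w1 = om x1 y1"
  define w2 where "w2 = om x2 y2"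
  have b1: "x1 > 0" "-1 < w1" "w1 < 1" "r1sq x1 y1 * w1^2 - (x1^2-4) * w1 - 4*x1^2*y1^2 = 0"
    using basic[of x1 y1] p p1 unfolding w1_def by auto
  have b2: "x2 > 0" "-1 < w2" "w2 < 1" "r1sq x2 y2 * w2^2 - (x2^2-4) * w2 - 4*x2^2*y2^2 = 0"
    using basic[of x2 y2] q q1 unfolding w2_def by auto
  have eu: "(1+w1)/(1-w1)*x1 = (1+w2)/(1-w2)*x2" and ev: "\<bar>w1\<bar>/(1+w1)*y1 = \<bar>w2\<bar>/(1+w2)*y2"
    using e unfolding p1 q1 Wmap_def w1_def w2_def by (auto simp: Let_def)
  have ph: "phi ((1+w1)/(1-w1)*x1) w1 = phi ((1+w1)/(1-w1)*x1) w2"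
    using key_id[OF b1(2,3,4)] key_id[OF b2(2,3,4)] eu ev by metis
  have ww: "w1 = w2"
  proof (rule ccontr)
    assume "w1 \<noteq> w2"
    then consider "w1 < w2" | "w2 < w1" by linarith
    then show False
    proof cases
      case 1 then show False using mono[of x1 y1 x2 y2] p q p1 q1 eu ph unfolding w1_def w2_def by auto
    next
      case 2 then show False using mono[of x2 y2 x1 y1] p q p1 q1 eu ph unfolding w1_def w2_def by auto
    qed
  qed
  have f: "(1+w1)/(1-w1) \<noteq> 0" using b1 by auto
  have xx: "x1 = x2" using eu f unfolding ww by simp
  have yy: "y1 = y2"
  proof (cases "w1 = 0")
    case True
    then have "4*x1^2*y1^2 = 0" "4*x2^2*y2^2 = 0" using b1(4) b2(4) ww by auto
    then show ?thesis using b1(1) b2(1) by auto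
  next
    case False
    then have "\<bar>w1\<bar>/(1+w1) \<noteq> 0" using b1 by auto
    then show ?thesis using ev unfolding ww by simp
  qed
  show "p = q" using p1 q1 xx yy by simp
qed

lemma inj_plus: "inj_on W_plus Rplus"
  unfolding W_plus_def
proof (rule inj_generic)
  fix x y assume "(x,y) \<in> Rplus"
  then show "x > 0 \<and> -1 < omega_plus x y \<and> omega_plus x y < 1 \<and>
      r1sq x y * (omega_plus x y)^2 - (x^2-4) * omega_plus x y - 4*x^2*y^2 = 0"
    using Rplus_D omp_nonneg[of x y] omp_lt1[of x y] quad_plus[of x y] by force
next
  fix x1 y1 x2 y2 assume a: "(x1,y1) \<in> Rplus" "(x2,y2) \<in> Rplus" "omega_plus x1 y1 < omega_plus x2 y2"
    "(1 + omega_plus x1 y1)/(1 - omega_plus x1 y1)*x1 = (1 + omega_plus x2 y2)/(1 - omega_plus x2 y2)*x2"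
  have u: "(1 + omega_plus x1 y1)/(1 - omega_plus x1 y1)*x1 > 0"
    using Rplus_D[OF a(1)] omp_nonneg[of x1 y1] omp_lt1[of x1 y1] by auto
  show "phi ((1 + omega_plus x1 y1)/(1 - omega_plus x1 y1)*x1) (omega_plus x1 y1) \<noteq>
        phi ((1 + omega_plus x1 y1)/(1 - omega_plus x1 y1)*x1) (omega_plus x2 y2)"
    using phi_mono_plus[OF u omp_nonneg a(3) omp_lt1 h_plus[OF a(1) refl]] by simp
qed

lemma inj_minus: "inj_on W_minus Rminus"
  unfolding W_minus_def
proof (rule inj_generic)
  fix x y assume "(x,y) \<in> Rminus"
  then show "x > 0 \<and> -1 < omega_minus x y \<and> omega_minus x y < 1 \<and>
      r1sq x y * (omega_minus x y)^2 - (x^2-4) * omega_minus x y - 4*x^2*y^2 = 0"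
    using Rminus_D omm_nonpos[of x y] omm_gtm1[of x y] quad_minus[of x y] by force
next
  fix x1 y1 x2 y2 assume a: "(x1,y1) \<in> Rminus" "(x2,y2) \<in> Rminus" "omega_minus x1 y1 < omega_minus x2 y2"
    "(1 + omega_minus x1 y1)/(1 - omega_minus x1 y1)*x1 = (1 + omega_minus x2 y2)/(1 - omega_minus x2 y2)*x2"
  have x1: "x1 > 0" using Rminus_D[OF a(1)] by auto
  have u: "(1 + omega_minus x1 y1)/(1 - omega_minus x1 y1)*x1 > 0"
    using x1 omm_nonpos[of x1 y1] omm_gtm1[OF x1[THEN less_imp_neq, symmetric], of y1] by auto
  have h: "4 - ((1 + omega_minus x1 y1)/(1 - omega_minus x1 y1)*x1)^2 *
       ((1 - omega_minus x2 y2)/(1 + omega_minus x2 y2))^3 \<le> 0"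
    using h_minus[OF a(2) refl] a(4) by simp
  have "phi ((1 + omega_minus x1 y1)/(1 - omega_minus x1 y1)*x1) (omega_minus x2 y2) <
        phi ((1 + omega_minus x1 y1)/(1 - omega_minus x1 y1)*x1) (omega_minus x1 y1)"
    using x1 by (intro phi_mono_minus[OF u _ a(3) omm_nonpos h] omm_gtm1) auto
  then show "phi ((1 + omega_minus x1 y1)/(1 - omega_minus x1 y1)*x1) (omega_minus x1 y1) \<noteq>
        phi ((1 + omega_minus x1 y1)/(1 - omega_minus x1 y1)*x1) (omega_minus x2 y2)" by simp
qed

lemma homeo_local:
  fixes f :: "'a::metric_space \<Rightarrow> 'b::metric_space"
  assumes cont: "continuous_on S f" and inj: "inj_on f S"
    and cover: "\<And>y. y \<in> f ` S \<Longrightarrow> \<exists>UU K. open UU \<and> y \<in> UU \<and> compact K \<and> K \<subseteq> S \<and> (\<forall>x\<in>S. f x \<in> UU \<longrightarrow> x \<in> K)"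
  shows "\<exists>g. homeomorphism S (f ` S) f g"
proof -
  define g where "g = the_inv_into S f"
  have gf: "\<And>x. x \<in> S \<Longrightarrow> g (f x) = x" unfolding g_def using inj by (simp add: the_inv_into_f_f)
  have fg: "\<And>y. y \<in> f ` S \<Longrightarrow> f (g y) = y" unfolding g_def using inj by (simp add: f_the_inv_into_f)
  have gS: "\<And>y. y \<in> f ` S \<Longrightarrow> g y \<in> S" unfolding g_def using inj by (simp add: the_inv_into_into)
  have "continuous_on (f ` S) g"
    unfolding continuous_on_eq_continuous_within
  proof
    fix y assume y: "y \<in> f ` S"
    obtain UU K where OK: "open UU" "y \<in> UU" "compact K" "K \<subseteq> S" "\<forall>x\<in>S. f x \<in> UU \<longrightarrow> x \<in> K"
      using cover[OF y] by blast
    obtain g' where g': "homeomorphism K (f ` K) f g'"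
      using homeomorphism_compact[OF OK(3) continuous_on_subset[OF cont OK(4)] refl inj_on_subset[OF inj OK(4)]] by blast
    have "continuous_on (f ` K) g'" using g' unfolding homeomorphism_def by blast
    moreover have "\<And>z. z \<in> f ` K \<Longrightarrow> g' z = g z"
      using g' OK(4) gf unfolding homeomorphism_def by auto
    ultimately have "continuous_on (f ` K) g" using continuous_on_cong by blast
    moreover have "f ` S \<inter> UU \<subseteq> f ` K" using OK(5) by auto
    ultimately have "continuous_on (f ` S \<inter> UU) g" using continuous_on_subset by blast
    then have "continuous (at y within (f ` S \<inter> UU)) g" using y OK(2)
      by (simp add: continuous_on_eq_continuous_within)
    moreover have "at y within (f ` S \<inter> UU) = at y within (f ` S)"
      by (rule at_within_nhd[OF OK(2) OK(1)]) auto
    ultimately show "continuous (at y within (f ` S)) g" by simp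
  qed
  then have "homeomorphism S (f ` S) f g"
    unfolding homeomorphism_def using cont gf fg gS by (auto simp: image_iff)
  then show ?thesis by blast
qed

lemma compact_strip:
  fixes a b :: real
  assumes "0 < a"
  shows "compact {p::real\<times>real. a \<le> fst p \<and> fst p \<le> b \<and> 0 \<le> 4 - 4*(snd p)^2 - (fst p)^2*(snd p)^2 - 8*(fst p)^2*(snd p)^4}"
    (is "compact ?K")
proof (rule compact_eq_bounded_closed[THEN iffD2], rule conjI)
  have "?K \<subseteq> {a..b} \<times> {-1..1}"
  proof
    fix p assume "p \<in> ?K"
    then obtain x y where p: "p = (x,y)" and h: "a \<le> x" "x \<le> b" "0 \<le> 4 - 4*y^2 - x^2*y^2 - 8*x^2*y^4"
      by (cases p) auto
    have g: "0 \<le> 4 - 4*y^2 - x^2*y^2 - 8*x^2*y^4" using h(3) by simp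
    have "x^2*y^2 \<ge> 0" "8*x^2*y^4 \<ge> 0" by auto
    then have "y^2 \<le> 1" using g by linarith
    then have "\<bar>y\<bar> \<le> 1" by (simp add: abs_square_le_1)
    then show "p \<in> {a..b} \<times> {-1..1}" using h p by auto
  qed
  then show "bounded ?K" by (rule bounded_subset[OF bounded_Times[OF bounded_closed_interval bounded_closed_interval]])
  show "closed ?K"
    by (intro closed_Collect_conj closed_Collect_le continuous_intros)
qed

lemma cont_omp: "continuous_on S (\<lambda>p. omega_plus (fst p) (snd p))"
proof -
  have "\<And>p. 2 * r1sq (fst p) (snd p) \<noteq> 0" using r1sq_pos by (metis mult_eq_0_iff order_less_irrefl zero_neq_numeral)
  then show ?thesis unfolding omega_plus_def Delta_def r1sq_def
    by (intro continuous_intros) (auto simp: r1sq_def)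
qed

lemma cont_omm: "continuous_on S (\<lambda>p. omega_minus (fst p) (snd p))"
proof -
  have "\<And>p. 2 * r1sq (fst p) (snd p) \<noteq> 0" using r1sq_pos by (metis mult_eq_0_iff order_less_irrefl zero_neq_numeral)
  then show ?thesis unfolding omega_minus_def Delta_def r1sq_def
    by (intro continuous_intros) (auto simp: r1sq_def)
qed

lemma cont_Wmap:
  assumes "continuous_on S (\<lambda>p. om (fst p) (snd p))" "\<And>p. p \<in> S \<Longrightarrow> -1 < om (fst p) (snd p) \<and> om (fst p) (snd p) < 1"
  shows "continuous_on S (Wmap om)"
proof -
  have e: "Wmap om = (\<lambda>p. ((1 + om (fst p) (snd p))/(1 - om (fst p) (snd p)) * fst p,
                \<bar>om (fst p) (snd p)\<bar>/(1 + om (fst p) (snd p)) * snd p))"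
    unfolding Wmap_def by (simp add: Let_def)
  show ?thesis unfolding e using assms(2)
    by (intro continuous_intros assms(1)) force+
qed

lemma open_fst_gt: "open {q::real\<times>real. c < fst q}"
  by (intro open_Collect_less continuous_intros)

lemma open_fst_lt: "open {q::real\<times>real. fst q < c}"
  by (intro open_Collect_less continuous_intros)

lemma homeo_plus: "\<exists>g. homeomorphism Rplus (W_plus ` Rplus) W_plus g"
proof (rule homeo_local)
  show "continuous_on Rplus W_plus" unfolding W_plus_def
    using omp_nonneg omp_lt1 by (intro cont_Wmap cont_omp) (auto intro: less_le_trans[of _ 0])
  show "inj_on W_plus Rplus" by (rule inj_plus)
  fix q assume "q \<in> W_plus ` Rplus"
  then obtain x0 y0 where p0: "(x0,y0) \<in> Rplus" and q: "q = W_plus (x0,y0)" by auto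
  define u0 where "u0 = fst q"
  have "u0 > 0" unfolding u0_def q W_plus_eq using Rplus_D[OF p0] omp_nonneg[of x0 y0] omp_lt1[of x0 y0] by auto
  define K where "K = {p::real\<times>real. u0/8 \<le> fst p \<and> fst p \<le> 2 \<and> 0 \<le> 4 - 4*(snd p)^2 - (fst p)^2*(snd p)^2 - 8*(fst p)^2*(snd p)^4}"
  have "open {q::real\<times>real. u0/2 < fst q}" by (rule open_fst_gt)
  moreover have "q \<in> {q::real\<times>real. u0/2 < fst q}" using \<open>u0 > 0\<close> unfolding u0_def by auto
  moreover have "compact K" unfolding K_def using \<open>u0 > 0\<close> by (intro compact_strip) auto
  moreover have "K \<subseteq> Rplus" unfolding K_def Rplus_def Rset_def using \<open>u0 > 0\<close> by auto
  moreover have "\<forall>p\<in>Rplus. W_plus p \<in> {q::real\<times>real. u0/2 < fst q} \<longrightarrow> p \<in> K"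
  proof (intro ballI impI)
    fix p assume p: "p \<in> Rplus" and "W_plus p \<in> {q::real\<times>real. u0/2 < fst q}"
    obtain x y where pe: "p = (x,y)" by force
    have a: "0 < x" "x \<le> 2" "4 - 4*y^2 - x^2*y^2 - 8*x^2*y^4 \<ge> 0" using Rplus_D p pe by auto
    define w where "w = omega_plus x y"
    have w: "0 \<le> w" "w \<le> 3/5" using omp_nonneg omp_le p pe unfolding w_def by auto
    have lt: "u0/2 < (1+w)/(1-w)*x" using \<open>W_plus p \<in> _\<close> unfolding pe W_plus_eq w_def by simp
    have "(1+w)/(1-w) \<le> 4" using w by (simp add: divide_le_eq)
    then have "(1+w)/(1-w)*x \<le> 4*x" using a by (intro mult_right_mono) auto
    then have "u0/8 \<le> x" using lt by linarith
    then show "p \<in> K" unfolding K_def pe using a by simp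
  qed
  ultimately show "\<exists>UU K. open UU \<and> q \<in> UU \<and> compact K \<and> K \<subseteq> Rplus \<and> (\<forall>x\<in>Rplus. W_plus x \<in> UU \<longrightarrow> x \<in> K)"
    by blast
qed

lemma homeo_minus: "\<exists>g. homeomorphism Rminus (W_minus ` Rminus) W_minus g"
proof (rule homeo_local)
  show "continuous_on Rminus W_minus" unfolding W_minus_def
  proof (intro cont_Wmap cont_omm)
    fix p assume "p \<in> Rminus"
    then have "fst p \<noteq> 0" using Rminus_D[of "fst p" "snd p"] by auto
    then show "-1 < omega_minus (fst p) (snd p) \<and> omega_minus (fst p) (snd p) < 1"
      using omm_gtm1 omm_nonpos[of "fst p" "snd p"] by auto
  qed
  show "inj_on W_minus Rminus" by (rule inj_minus)
  fix q assume "q \<in> W_minus ` Rminus"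
  then obtain x0 y0 where p0: "(x0,y0) \<in> Rminus" and q: "q = W_minus (x0,y0)" by auto
  define u0 where "u0 = fst q"
  have x0: "x0 > 0" using Rminus_D[OF p0] by auto
  have "u0 > 0" unfolding u0_def q W_minus_eq using x0 omm_nonpos[of x0 y0] omm_gtm1[of x0 y0] by auto
  define K where "K = {p::real\<times>real. 2 \<le> fst p \<and> fst p \<le> 8*u0 \<and> 0 \<le> 4 - 4*(snd p)^2 - (fst p)^2*(snd p)^2 - 8*(fst p)^2*(snd p)^4}"
  have "open {q::real\<times>real. fst q < 2*u0}" by (rule open_fst_lt)
  moreover have "q \<in> {q::real\<times>real. fst q < 2*u0}" using \<open>u0 > 0\<close> unfolding u0_def by auto
  moreover have "compact K" unfolding K_def by (intro compact_strip) auto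
  moreover have "K \<subseteq> Rminus" unfolding K_def Rminus_def Rset_def by auto
  moreover have "\<forall>p\<in>Rminus. W_minus p \<in> {q::real\<times>real. fst q < 2*u0} \<longrightarrow> p \<in> K"
  proof (intro ballI impI)
    fix p assume p: "p \<in> Rminus" and "W_minus p \<in> {q::real\<times>real. fst q < 2*u0}"
    obtain x y where pe: "p = (x,y)" by force
    have a: "0 < x" "2 \<le> x" "4 - 4*y^2 - x^2*y^2 - 8*x^2*y^4 \<ge> 0" using Rminus_D p pe by auto
    define w where "w = omega_minus x y"
    have w: "w \<le> 0" "-3/5 \<le> w" using omm_nonpos omm_ge p pe unfolding w_def by auto
    have lt: "(1+w)/(1-w)*x < 2*u0" using \<open>W_minus p \<in> _\<close> unfolding pe W_minus_eq w_def by simp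
    have "1/4 \<le> (1+w)/(1-w)" using w by (simp add: le_divide_eq)
    then have "1/4*x \<le> (1+w)/(1-w)*x" using a by (intro mult_right_mono) auto
    then have "x \<le> 8*u0" using lt by linarith
    then show "p \<in> K" unfolding K_def pe using a by simp
  qed
  ultimately show "\<exists>UU K. open UU \<and> q \<in> UU \<and> compact K \<and> K \<subseteq> Rminus \<and> (\<forall>x\<in>Rminus. W_minus x \<in> UU \<longrightarrow> x \<in> K)"
    by blast
qed

definition gom :: "real \<Rightarrow> real \<times> real \<Rightarrow> real" where
  "gom s p = ((fst p)^2 - 4 + s * sqrt (Delta (fst p) (snd p))) / (2 * r1sq (fst p) (snd p))"

lemma gom_diff:
  assumes "Delta (fst p) (snd p) > 0"
  shows "\<exists>D. (gom s has_derivative D) (at p)"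
proof -
  have r: "2 * r1sq (fst p) (snd p) \<noteq> 0" using r1sq_pos[of "fst p" "snd p"] by simp
  show ?thesis unfolding gom_def
    apply (rule exI)
    apply (rule derivative_intros | use assms r in \<open>simp add: Delta_def r1sq_def\<close>)+
    done
qed

lemma implicit_diff:
  fixes f :: "real \<times> real \<Rightarrow> real"
  assumes d: "(f has_derivative Df) (at p)"
    and Q: "\<And>q. r1sq (fst q) (snd q) * (f q)^2 - ((fst q)^2-4) * f q - 4*(fst q)^2*(snd q)^2 = 0"
  shows "(2 * r1sq (fst p) (snd p) * f p - ((fst p)^2 - 4)) * Df h =
     - (((2*fst p + 8*fst p*(snd p)^2)*(f p)^2 - 2*fst p*f p - 8*fst p*(snd p)^2) * fst h
        + (8*(fst p)^2* snd p*(f p)^2 - 8*(fst p)^2* snd p) * snd h)"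
proof -
  define F where "F = (\<lambda>q::real\<times>real. r1sq (fst q) (snd q) * (f q)^2 - ((fst q)^2-4) * f q - 4*(fst q)^2*(snd q)^2)"
  have "(F has_derivative (\<lambda>h. ((2*fst p + 8*fst p*(snd p)^2)*(f p)^2 - 2*fst p*f p - 8*fst p*(snd p)^2) * fst h
        + (8*(fst p)^2* snd p*(f p)^2 - 8*(fst p)^2* snd p) * snd h
        + (2 * r1sq (fst p) (snd p) * f p - ((fst p)^2 - 4)) * Df h)) (at p)"
    unfolding F_def r1sq_def
    by (rule derivative_eq_intros d refl | simp)+ (simp add: algebra_simps power2_eq_square)
  moreover have "F = (\<lambda>q. 0)" unfolding F_def using Q by auto
  then have "(F has_derivative (\<lambda>h. 0)) (at p)" by simp
  ultimately have "(\<lambda>h. ((2*fst p + 8*fst p*(snd p)^2)*(f p)^2 - 2*fst p*f p - 8*fst p*(snd p)^2) * fst h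
        + (8*(fst p)^2* snd p*(f p)^2 - 8*(fst p)^2* snd p) * snd h
        + (2 * r1sq (fst p) (snd p) * f p - ((fst p)^2 - 4)) * Df h) = (\<lambda>h. 0)"
    by (rule has_derivative_unique)
  then have "((2*fst p + 8*fst p*(snd p)^2)*(f p)^2 - 2*fst p*f p - 8*fst p*(snd p)^2) * fst h
        + (8*(fst p)^2* snd p*(f p)^2 - 8*(fst p)^2* snd p) * snd h
        + (2 * r1sq (fst p) (snd p) * f p - ((fst p)^2 - 4)) * Df h = 0" by metis
  then show ?thesis by linarith
qed

lemma DERIV_A: assumes "w0 \<noteq> (1::real)" shows "DERIV (\<lambda>w. (1+w)/(1-w)) w0 :> 2/(1-w0)^2"
proof -
  have "1 - w0 \<noteq> 0" using assms by simp
  then show ?thesis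
    by (auto intro!: derivative_eq_intros simp: field_simps power2_eq_square)
qed

lemma DERIV_B: assumes "w0 \<noteq> (-1::real)" shows "DERIV (\<lambda>w. w/(1+w)) w0 :> 1/(1+w0)^2"
proof -
  have "1 + w0 \<noteq> 0" using assms by (metis add.commute add_eq_0_iff2 minus_minus)
  then show ?thesis
    by (auto intro!: derivative_eq_intros simp: field_simps power2_eq_square)
qed

lemma W_deriv:
  fixes f :: "real \<times> real \<Rightarrow> real" and \<sigma> :: real
  assumes d: "(f has_derivative Df) (at p)" and w: "-1 < f p" "f p < 1"
  shows "((\<lambda>q. ((1 + f q)/(1 - f q) * fst q, \<sigma> * (f q/(1 + f q)) * snd q)) has_derivative
        (\<lambda>h. (fst h * ((1 + f p)/(1 - f p)) + fst p * (2/(1 - f p)^2) * Df h,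
              \<sigma> * (snd h * (f p/(1 + f p)) + snd p * (1/(1 + f p)^2) * Df h)))) (at p)"
proof -
  have dA: "((\<lambda>q. (1 + f q)/(1 - f q)) has_derivative (\<lambda>h. Df h * (2/(1 - f p)^2))) (at p)"
    using DERIV_compose_FDERIV[OF DERIV_A d] w by simp
  have dB: "((\<lambda>q. f q/(1 + f q)) has_derivative (\<lambda>h. Df h * (1/(1 + f p)^2))) (at p)"
    using DERIV_compose_FDERIV[OF DERIV_B d] w by simp
  have d1: "((\<lambda>q. (1 + f q)/(1 - f q) * fst q) has_derivative
      (\<lambda>h. (1 + f p)/(1 - f p) * fst h + Df h * (2/(1 - f p)^2) * fst p)) (at p)"
    using has_derivative_mult[OF dA has_derivative_fst[OF has_derivative_ident]] by simp
  have d2: "((\<lambda>q. \<sigma> * (f q/(1 + f q)) * snd q) has_derivative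
      (\<lambda>h. \<sigma> * (f p/(1 + f p)) * snd h + \<sigma> * (Df h * (1/(1 + f p)^2)) * snd p)) (at p)"
    using has_derivative_mult[OF has_derivative_mult[OF has_derivative_const dB] has_derivative_snd[OF has_derivative_ident]]
    by simp
  have e: "(\<lambda>h. (fst h * ((1 + f p)/(1 - f p)) + fst p * (2/(1 - f p)^2) * Df h,
              \<sigma> * (snd h * (f p/(1 + f p)) + snd p * (1/(1 + f p)^2) * Df h))) =
     (\<lambda>h. ((1 + f p)/(1 - f p) * fst h + Df h * (2/(1 - f p)^2) * fst p,
           \<sigma> * (f p/(1 + f p)) * snd h + \<sigma> * (Df h * (1/(1 + f p)^2)) * snd p))"
    by (simp add: algebra_simps)
  show ?thesis unfolding e by (rule has_derivative_Pair[OF d1 d2])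
qed

lemma jac_alg:
  fixes a b w x y dx dy :: real
  assumes "a \<noteq> 0" "b \<noteq> 0"
  shows "(b/a * (w/b) + b/a * (y*(1/b^2)*dy) + (w/b)*(x*(2/a^2)*dx)) * (a^2*b) = w*a*b + a*y*dy + 2*w*x*dx"
  using assms by (simp add: field_simps power2_eq_square)

lemma jac_formula:
  fixes x y w dx dy :: real
  assumes w: "-1 < w" "w < 1"
    and ex: "(2 * r1sq x y * w - (x^2 - 4)) * dx = - ((2*x + 8*x*y^2)*w^2 - 2*x*w - 8*x*y^2)"
    and ey: "(2 * r1sq x y * w - (x^2 - 4)) * dy = - (8*x^2*y*w^2 - 8*x^2*y)"
    and Q: "r1sq x y * w^2 - (x^2-4) * w - 4*x^2*y^2 = 0"
  shows "((1+w)/(1-w) * (w/(1+w)) + (1+w)/(1-w) * (y*(1/(1+w)^2)*dy) + (w/(1+w))*(x*(2/(1-w)^2)*dx))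
          * (2 * r1sq x y * w - (x^2 - 4)) * ((1-w)^2*(1+w)) = 3*w*(4*(1+w)^2 - x^2*(1-w)^2)"
proof -
  define Qw where "Qw = 2 * r1sq x y * w - (x^2 - 4)"
  have w1: "1 + w \<noteq> 0" "1 - w \<noteq> 0" using w by auto
  have "((1+w)/(1-w) * (w/(1+w)) + (1+w)/(1-w) * (y*(1/(1+w)^2)*dy) + (w/(1+w))*(x*(2/(1-w)^2)*dx))
          * ((1-w)^2*(1+w)) = w*(1-w)*(1+w) + (1-w)*y*dy + 2*w*x*dx"
    by (rule jac_alg[OF w1(2) w1(1)])
  have e1: "((1+w)/(1-w) * (w/(1+w)) + (1+w)/(1-w) * (y*(1/(1+w)^2)*dy) + (w/(1+w))*(x*(2/(1-w)^2)*dx))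
          * Qw * ((1-w)^2*(1+w)) = (w*(1-w)*(1+w) + (1-w)*y*dy + 2*w*x*dx) * Qw"
    unfolding jac_alg[OF w1(2) w1(1), symmetric] by (simp only: ac_simps)
  have e2: "(w*(1-w)*(1+w) + (1-w)*y*dy + 2*w*x*dx) * Qw = w*(1-w)*(1+w)*Qw + (1-w)*y*(Qw*dy) + 2*w*x*(Qw*dx)"
    by (simp add: algebra_simps)
  have "((1+w)/(1-w) * (w/(1+w)) + (1+w)/(1-w) * (y*(1/(1+w)^2)*dy) + (w/(1+w))*(x*(2/(1-w)^2)*dx))
          * Qw * ((1-w)^2*(1+w)) = w*(1-w)*(1+w)*Qw + (1-w)*y*(Qw*dy) + 2*w*x*(Qw*dx)"
    using e1 e2 by simp
  also have "\<dots> = w*(1-w)*(1+w)*Qw - (1-w)*y*(8*x^2*y*w^2 - 8*x^2*y) - 2*w*x*((2*x + 8*x*y^2)*w^2 - 2*x*w - 8*x*y^2)"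
    unfolding Qw_def ex ey by (simp add: algebra_simps)
  also have "\<dots> = 3*w*(4*(1+w)^2 - x^2*(1-w)^2) - 2*(w^2+w+1)*(r1sq x y * w^2 - (x^2-4) * w - 4*x^2*y^2)"
    unfolding Qw_def r1sq_def by (simp add: algebra_simps power2_eq_square)
  finally show ?thesis using Q unfolding Qw_def by simp
qed

lemma gom_quad: "s^2 = 1 \<Longrightarrow> r1sq (fst q) (snd q) * (gom s q)^2 - ((fst q)^2-4) * gom s q - 4*(fst q)^2*(snd q)^2 = 0"
  by (rule quad_gen) (auto simp: gom_def)

lemma gom_Qw: "2 * r1sq (fst q) (snd q) * gom s q - ((fst q)^2 - 4) = s * sqrt (Delta (fst q) (snd q))"
proof -
  have "r1sq (fst q) (snd q) \<noteq> 0" using r1sq_pos by (metis less_irrefl)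
  then show ?thesis unfolding gom_def by (simp add: field_simps)
qed

lemma orient_point:
  fixes s \<sigma> :: real and Wf :: "real \<times> real \<Rightarrow> real \<times> real"
  assumes s: "s^2 = 1" and D: "Delta (fst p) (snd p) > 0" and w: "-1 < gom s p" "gom s p < 1"
    and W: "\<And>q. Wf q = ((1 + gom s q)/(1 - gom s q) * fst q, \<sigma> * (gom s q/(1 + gom s q)) * snd q)"
  shows "\<exists>D. (Wf has_derivative D) (at p) \<and>
     jac_det D * (s * sqrt (Delta (fst p) (snd p))) * ((1 - gom s p)^2 * (1 + gom s p)) =
       \<sigma> * (3 * gom s p * (4*(1 + gom s p)^2 - (fst p)^2*(1 - gom s p)^2))"
proof -
  obtain Df where d: "(gom s has_derivative Df) (at p)" using gom_diff[OF D] by blast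
  have We: "Wf = (\<lambda>q. ((1 + gom s q)/(1 - gom s q) * fst q, \<sigma> * (gom s q/(1 + gom s q)) * snd q))"
    using W by auto
  define x y w where "x = fst p" "y = snd p" "w = gom s p"
  define A B A' B' where "A = (1+w)/(1-w)" "B = w/(1+w)" "A' = 2/(1-w)^2" "B' = 1/(1+w)^2"
  define DD where "DD = (\<lambda>h. (fst h * ((1 + gom s p)/(1 - gom s p)) + fst p * (2/(1 - gom s p)^2) * Df h,
              \<sigma> * (snd h * (gom s p/(1 + gom s p)) + snd p * (1/(1 + gom s p)^2) * Df h)))"
  have hd: "(Wf has_derivative DD) (at p)" unfolding We DD_def by (rule W_deriv[OF d w])
  have lin: "linear Df" using d by (rule has_derivative_linear)
  have Df0: "Df (0,0) = 0" using linear_0[OF lin] by (simp add: zero_prod_def)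
  have jd: "jac_det DD = \<sigma> * (A*B + A*(y*B'*Df (0,1)) + B*(x*A'*Df (1,0)))"
    unfolding jac_det_def DD_def A_B_A'_B'_def x_y_w_def by (simp add: algebra_simps)
  have Q: "\<And>q. r1sq (fst q) (snd q) * (gom s q)^2 - ((fst q)^2-4) * gom s q - 4*(fst q)^2*(snd q)^2 = 0"
    using gom_quad[OF s] by blast
  have ex: "(2 * r1sq x y * w - (x^2 - 4)) * Df (1,0) = - ((2*x + 8*x*y^2)*w^2 - 2*x*w - 8*x*y^2)"
    using implicit_diff[OF d Q, of "(1,0)"] unfolding x_y_w_def by simp
  have ey: "(2 * r1sq x y * w - (x^2 - 4)) * Df (0,1) = - (8*x^2*y*w^2 - 8*x^2*y)"
    using implicit_diff[OF d Q, of "(0,1)"] unfolding x_y_w_def by simp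
  have jf: "(A*B + A*(y*B'*Df (0,1)) + B*(x*A'*Df (1,0))) * (2 * r1sq x y * w - (x^2 - 4)) * ((1-w)^2*(1+w))
      = 3*w*(4*(1+w)^2 - x^2*(1-w)^2)"
    unfolding A_B_A'_B'_def using jac_formula[OF w[folded x_y_w_def] ex ey Q[of p, folded x_y_w_def]] by simp
  have "jac_det DD * (s * sqrt (Delta x y)) * ((1-w)^2*(1+w)) = \<sigma> * (3*w*(4*(1+w)^2 - x^2*(1-w)^2))"
    unfolding jd using jf gom_Qw[of p s] unfolding x_y_w_def by (simp add: mult.assoc)
  then show ?thesis using hd unfolding x_y_w_def by blast
qed

lemma omp_gom: "omega_plus (fst q) (snd q) = gom 1 q"
  unfolding omega_plus_def gom_def by simp
lemma omm_gom: "omega_minus (fst q) (snd q) = gom (-1) q"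
  unfolding omega_minus_def gom_def by simp

lemma Wp_gom: "W_plus q = ((1 + gom 1 q)/(1 - gom 1 q) * fst q, 1 * (gom 1 q/(1 + gom 1 q)) * snd q)"
  using W_plus_eq[of "fst q" "snd q"] omp_gom[of q] omp_nonneg[of "fst q" "snd q"] by simp

lemma Wm_gom: "W_minus q = ((1 + gom (-1) q)/(1 - gom (-1) q) * fst q, (-1) * (gom (-1) q/(1 + gom (-1) q)) * snd q)"
  using W_minus_eq[of "fst q" "snd q"] omm_gom[of q] omm_nonpos[of "fst q" "snd q"] by simp

lemma Delta_pos: assumes "x \<noteq> 2" "x > 0" shows "Delta x y > 0"
proof -
  have "(x+2)^2 > 0" "(x-2)^2 > 0" using assms by auto
  moreover have "8*x^2*y^2 \<ge> 0" by simp
  ultimately have "(x+2)^2 + 8*x^2*y^2 > 0" "(x-2)^2 + 8*x^2*y^2 > 0" by linarith+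
  then show ?thesis unfolding Delta_def by simp
qed

lemma int_plus: assumes "p \<in> interior Rplus" shows "0 < fst p \<and> fst p < 2"
proof -
  obtain e where e: "e > 0" "ball p e \<subseteq> Rplus" using assms mem_interior by blast
  have "(fst p + e/2, snd p) \<in> ball p e" using e by (cases p) (simp add: dist_Pair_Pair dist_real_def)
  then have "(fst p + e/2, snd p) \<in> Rplus" using e by blast
  moreover have "p \<in> Rplus" using assms interior_subset by blast
  ultimately show ?thesis using e unfolding Rplus_def Rset_def by (cases p) auto
qed

lemma int_minus: assumes "p \<in> interior Rminus" shows "2 < fst p"
proof -
  obtain e where e: "e > 0" "ball p e \<subseteq> Rminus" using assms mem_interior by blast
  have "(fst p - e/2, snd p) \<in> ball p e" using e by (cases p) (simp add: dist_Pair_Pair dist_real_def)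
  then have "(fst p - e/2, snd p) \<in> Rminus" using e by blast
  then show ?thesis using e unfolding Rminus_def Rset_def by (cases p) auto
qed

lemma open_Rset_strict: "open {p::real\<times>real. a < fst p \<and> fst p < b \<and> 0 < 4 - 4*(snd p)^2 - (fst p)^2*(snd p)^2 - 8*(fst p)^2*(snd p)^4}"
  by (intro open_Collect_conj open_Collect_less continuous_intros)

lemma pt_plus: "(1, 1/2) \<in> interior Rplus"
proof -
  let ?T = "{p::real\<times>real. 0 < fst p \<and> fst p < 2 \<and> 0 < 4 - 4*(snd p)^2 - (fst p)^2*(snd p)^2 - 8*(fst p)^2*(snd p)^4}"
  have o: "open ?T" by (rule open_Rset_strict)
  have "?T \<subseteq> Rplus" by (auto simp: Rplus_def Rset_def)
  then have "?T \<subseteq> interior Rplus" using o by (rule interior_maximal)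
  moreover have "(1, 1/2) \<in> ?T" by (simp add: power2_eq_square power4_eq_xxxx)
  ultimately show ?thesis by blast
qed

lemma pt_minus: "(3, 1/10) \<in> interior Rminus"
proof -
  let ?T = "{p::real\<times>real. 2 < fst p \<and> fst p < 4 \<and> 0 < 4 - 4*(snd p)^2 - (fst p)^2*(snd p)^2 - 8*(fst p)^2*(snd p)^4}"
  have o: "open ?T" by (rule open_Rset_strict)
  have "?T \<subseteq> Rminus" by (auto simp: Rminus_def Rset_def)
  then have "?T \<subseteq> interior Rminus" using o by (rule interior_maximal)
  moreover have "(3, 1/10) \<in> ?T" by (simp add: power2_eq_square power4_eq_xxxx)
  ultimately show ?thesis by blast
qed

lemma orient_plus_pt:
  assumes "0 < fst p" "fst p < 2"
  shows "\<exists>D. (W_plus has_derivative D) (at p) \<and> jac_det D \<ge> 0 \<and> (snd p \<noteq> 0 \<longrightarrow> jac_det D > 0)"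
proof -
  define x y w where "x = fst p" "y = snd p" "w = gom 1 p"
  have w: "0 \<le> w" "w < 1" unfolding x_y_w_def using omp_nonneg omp_lt1 omp_gom by metis+
  have Dp: "Delta (fst p) (snd p) > 0" using assms by (intro Delta_pos) auto
  obtain D where hd: "(W_plus has_derivative D) (at p)" and
    jd: "jac_det D * (1 * sqrt (Delta x y)) * ((1 - w)^2 * (1 + w)) = 1 * (3 * w * (4*(1 + w)^2 - x^2*(1 - w)^2))"
    using orient_point[of 1 p W_plus 1, OF _ Dp] w Wp_gom unfolding x_y_w_def by force
  have pos: "sqrt (Delta x y) * ((1 - w)^2 * (1 + w)) > 0" using Dp w unfolding x_y_w_def by simp
  have lt: "x*(1-w) < 2*(1+w)"
  proof -
    have "x*(1-w) < 2*(1-w)" using assms w unfolding x_y_w_def by (intro mult_strict_right_mono) auto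
    also have "\<dots> \<le> 2*(1+w)" using w by simp
    finally show ?thesis .
  qed
  have "(x*(1-w))^2 < (2*(1+w))^2" using lt assms w unfolding x_y_w_def by (intro power_strict_mono) auto
  moreover have "(x*(1-w))^2 = x^2*(1-w)^2" by (rule power_mult_distrib)
  moreover have "(2*(1+w))^2 = 4*(1+w)^2" by algebra
  ultimately have br: "4*(1 + w)^2 - x^2*(1 - w)^2 > 0" by linarith
  have N: "3 * w * (4*(1 + w)^2 - x^2*(1 - w)^2) \<ge> 0" using br w by simp
  have J: "jac_det D * (sqrt (Delta x y) * ((1 - w)^2 * (1 + w))) = 3 * w * (4*(1 + w)^2 - x^2*(1 - w)^2)"
    using jd by (simp add: mult.assoc)
  have "jac_det D \<ge> 0" using J N pos by (metis zero_le_mult_iff not_le)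
  moreover have "jac_det D > 0" if "snd p \<noteq> 0"
  proof -
    have "w \<noteq> 0"
    proof
      assume "w = 0"
      then have "4*x^2*y^2 = 0" using gom_quad[of 1 p] unfolding x_y_w_def by simp
      then show False using that assms unfolding x_y_w_def by simp
    qed
    then have "3 * w * (4*(1 + w)^2 - x^2*(1 - w)^2) > 0" using br w by simp
    then show ?thesis using J pos by (metis zero_less_mult_iff not_le less_le)
  qed
  ultimately show ?thesis using hd by blast
qed

lemma orient_minus_pt:
  assumes "2 < fst p"
  shows "\<exists>D. (W_minus has_derivative D) (at p) \<and> jac_det D \<ge> 0 \<and> (snd p \<noteq> 0 \<longrightarrow> jac_det D > 0)"
proof -
  define x y w where "x = fst p" "y = snd p" "w = gom (-1) p"
  have x0: "x \<noteq> 0" using assms unfolding x_y_w_def by simp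
  have w: "w \<le> 0" "-1 < w" unfolding x_y_w_def using omm_nonpos omm_gtm1[OF x0[unfolded x_y_w_def]] omm_gom by metis+
  have Dp: "Delta (fst p) (snd p) > 0" using assms by (intro Delta_pos) auto
  obtain D where hd: "(W_minus has_derivative D) (at p)" and
    jd: "jac_det D * ((-1) * sqrt (Delta x y)) * ((1 - w)^2 * (1 + w)) = (-1) * (3 * w * (4*(1 + w)^2 - x^2*(1 - w)^2))"
    using orient_point[of "-1" p W_minus "-1", OF _ Dp] w Wm_gom unfolding x_y_w_def by force
  have pos: "sqrt (Delta x y) * ((1 - w)^2 * (1 + w)) > 0" using Dp w unfolding x_y_w_def by simp
  have lt: "2*(1+w) < x*(1-w)"
  proof -
    have "2*(1+w) \<le> 2*(1-w)" using w by simp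
    also have "\<dots> < x*(1-w)" using assms w unfolding x_y_w_def by (intro mult_strict_right_mono) auto
    finally show ?thesis .
  qed
  have "(2*(1+w))^2 < (x*(1-w))^2" using lt w by (intro power_strict_mono) auto
  moreover have "(x*(1-w))^2 = x^2*(1-w)^2" by (rule power_mult_distrib)
  moreover have "(2*(1+w))^2 = 4*(1+w)^2" by algebra
  ultimately have br: "4*(1 + w)^2 - x^2*(1 - w)^2 < 0" by linarith
  have N: "3 * w * (4*(1 + w)^2 - x^2*(1 - w)^2) \<ge> 0" using br w by (simp add: mult_nonpos_nonpos)
  have J: "jac_det D * (sqrt (Delta x y) * ((1 - w)^2 * (1 + w))) = 3 * w * (4*(1 + w)^2 - x^2*(1 - w)^2)"
    using jd by (simp add: mult.assoc)
  have "jac_det D \<ge> 0" using J N pos by (metis zero_le_mult_iff not_le)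
  moreover have "jac_det D > 0" if "snd p \<noteq> 0"
  proof -
    have "w \<noteq> 0"
    proof
      assume "w = 0"
      then have "4*x^2*y^2 = 0" using gom_quad[of "-1" p] unfolding x_y_w_def by simp
      then show False using that assms unfolding x_y_w_def by simp
    qed
    then have "w < 0" using w by simp
    then have "3 * w * (4*(1 + w)^2 - x^2*(1 - w)^2) > 0" using br by (simp add: mult_neg_neg)
    then show ?thesis using J pos by (metis zero_less_mult_iff not_le less_le)
  qed
  ultimately show ?thesis using hd by blast
qed

lemma orient_plus: "orientation_preserving_on Rplus W_plus"
  unfolding orientation_preserving_on_def
proof (intro conjI ballI bexI)
  fix p assume "p \<in> interior Rplus"
  then show "\<exists>D. (W_plus has_derivative D) (at p) \<and> 0 \<le> jac_det D"
    using int_plus orient_plus_pt by blast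
next
  show "\<exists>D. (W_plus has_derivative D) (at (1, 1/2)) \<and> 0 < jac_det D"
    using orient_plus_pt[of "(1, 1/2)"] by auto
  show "(1, 1/2) \<in> interior Rplus" by (rule pt_plus)
qed

lemma orient_minus: "orientation_preserving_on Rminus W_minus"
  unfolding orientation_preserving_on_def
proof (intro conjI ballI bexI)
  fix p assume "p \<in> interior Rminus"
  then show "\<exists>D. (W_minus has_derivative D) (at p) \<and> 0 \<le> jac_det D"
    using int_minus orient_minus_pt by blast
next
  show "\<exists>D. (W_minus has_derivative D) (at (3, 1/10)) \<and> 0 < jac_det D"
    using orient_minus_pt[of "(3, 1/10)"] by auto
  show "(3, 1/10) \<in> interior Rminus" by (rule pt_minus)
qed

theorem proposition4p3:
  shows "(\<exists>g. homeomorphism Rplus (W_plus ` Rplus) W_plus g)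
       \<and> orientation_preserving_on Rplus W_plus
       \<and> W_plus ` Rplus \<subseteq> Rset
       \<and> (\<exists>g. homeomorphism Rminus (W_minus ` Rminus) W_minus g)
       \<and> orientation_preserving_on Rminus W_minus
       \<and> W_minus ` Rminus \<subseteq> Rset"
  using homeo_plus orient_plus W_plus_R homeo_minus orient_minus W_minus_R by blast

end
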